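(* In the setting of the context, let $\mu^*\in U$ be such that $(\Phi,\mu^* )$ has no singular connection. Then $\{f_\mu\}_{\mu\in U}$ satisfies Hypothesis (E) at $\mu^*$.
   Context: Let $N\ge2$, $\lambda\in(0,1)$, and $\varphi_1,\dots,\varphi_N\colon[0,1]\to[0,1]$ bi-Lipschitz with Lipschitz constant $\le\lambda$, $\Phi=\{\varphi_i\}$, and assume $\varphi_i([0,1])\subset(0,1)$ for every $i$. Let $U=\{\mu=(\mu_1,\dots,\mu_{N-1}):0<\mu_1<\cdots<\mu_{N-1}<1\}$, $\mu_0=0$, $\mu_N=1$. For $\mu\in U$, $f_\mu\colon[0,1]\to[0,1]$ satisfies $f_\mu=\varphi_i$ on $A_{i,\mu}=(\mu_{i-1},\mu_i)$, and at each point of $S_\mu=\{0,\mu_1,\dots,\mu_{N-1},1\}$, $f_\mu$ is left or right continuous. For $\alpha=(i_0,\dots,i_{n-1})$, $\varphi^\alpha=\varphi_{i_{n-1}}\circ\cdots\circ\varphi_{i_0}$; $(\Phi,\mu)$ has a singular connection if $\varphi^\alpha(\mu_i)=\mu_j$ for some $n\ge1$, $\alpha\in\{1,\dots,N\}^n$, $i,j\in\{1,\dots,N-1\}$. A point $x$ is regular of order $n$ if $f_\mu^k(x)\notin S_\mu$ for $0\le k<n$; $\mathcal{I}_n(f_\mu)$ is the set of tuples $(i_0,\dots,i_{n-1})$ such that some regular point of order $n$ has $f_\mu^k(x)\in A_{i_k,\mu}$ for $0\le k<n$. With $U_\delta(\mu^* )=U\cap B_\delta(\mu^* )$ and $\mathcal{J}^\delta_n(\mu^*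 )=\bigcup_{\mu\in U_\delta(\mu^* )}\mathcal{I}_n(f_\mu)$, Hypothesis (E) at $\mu^*$ means $\lim_{\delta\to0^+}\limsup_{n\to\infty}\frac1n\log\#\mathcal{J}_n^\delta(\mu^* )=0$. *)

theory Defs
  imports "HOL-Analysis.Analysis" "HOL-Library.Extended_Real"
begin

text \<open>Parameters mu = (mu_1,...,mu_{N-1}) are represented as functions nat => real whose
  values outside {1..N-1} are 0 (canonical representation).\<close>

definition param_space :: "nat \<Rightarrow> (nat \<Rightarrow> real) set" where
  "param_space N = {\<mu>. (\<forall>i. (i = 0 \<or> N - 1 < i) \<longrightarrow> \<mu> i = 0) \<and>
      (\<forall>i\<in>{1..N-1}. 0 < \<mu> i \<and> \<mu> i < 1) \<and>
      (\<forall>i j. 1 \<le> i \<longrightarrow> i < j \<longrightarrow> j \<le> N - 1 \<longrightarrow> \<mu> i < \<mu> j)}"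

definition mu_ext :: "nat \<Rightarrow> (nat \<Rightarrow> real) \<Rightarrow> nat \<Rightarrow> real" where
  "mu_ext N \<mu> i = (if i = 0 then 0 else if i = N then 1 else \<mu> i)"

definition A_int :: "nat \<Rightarrow> (nat \<Rightarrow> real) \<Rightarrow> nat \<Rightarrow> real set" where
  "A_int N \<mu> i = {mu_ext N \<mu> (i - 1) <..< mu_ext N \<mu> i}"

definition S_set :: "nat \<Rightarrow> (nat \<Rightarrow> real) \<Rightarrow> real set" where
  "S_set N \<mu> = mu_ext N \<mu> ` {0..N}"

definition param_dist :: "nat \<Rightarrow> (nat \<Rightarrow> real) \<Rightarrow> (nat \<Rightarrow> real) \<Rightarrow> real" where
  "param_dist N \<mu> \<nu> = sqrt (\<Sum>i=1..N-1. (\<mu> i - \<nu> i)\<^sup>2)"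

definition bi_lipschitz_contr :: "real \<Rightarrow> (real \<Rightarrow> real) \<Rightarrow> bool" where
  "bi_lipschitz_contr lam g \<longleftrightarrow>
     (\<exists>c>0. \<forall>x\<in>{0..1}. \<forall>y\<in>{0..1}. c * \<bar>x - y\<bar> \<le> \<bar>g x - g y\<bar>) \<and>
     (\<forall>x\<in>{0..1}. \<forall>y\<in>{0..1}. \<bar>g x - g y\<bar> \<le> lam * \<bar>x - y\<bar>)"

text \<open>phi^alpha = phi_{i_{n-1}} o ... o phi_{i_0}\<close>
definition comp_word :: "(nat \<Rightarrow> real \<Rightarrow> real) \<Rightarrow> nat list \<Rightarrow> real \<Rightarrow> real" where
  "comp_word \<phi> \<alpha> x = fold (\<lambda>i y. \<phi> i y) \<alpha> x"

definition singular_connection :: "nat \<Rightarrow> (nat \<Rightarrow> real \<Rightarrow> real) \<Rightarrow> (nat \<Rightarrow> real) \<Rightarrow> bool" where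
  "singular_connection N \<phi> \<mu> \<longleftrightarrow>
     (\<exists>\<alpha> i j. length \<alpha> \<ge> 1 \<and> set \<alpha> \<subseteq> {1..N} \<and> i \<in> {1..N-1} \<and> j \<in> {1..N-1} \<and>
        comp_word \<phi> \<alpha> (\<mu> i) = \<mu> j)"

definition admissible_map :: "nat \<Rightarrow> (nat \<Rightarrow> real \<Rightarrow> real) \<Rightarrow> (nat \<Rightarrow> real) \<Rightarrow> (real \<Rightarrow> real) \<Rightarrow> bool" where
  "admissible_map N \<phi> \<mu> g \<longleftrightarrow>
     g ` {0..1} \<subseteq> {0..1} \<and>
     (\<forall>i\<in>{1..N}. \<forall>x\<in>A_int N \<mu> i. g x = \<phi> i x) \<and>
     (\<forall>s\<in>S_set N \<mu>. continuous (at s within {0..s}) g \<or>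
                      continuous (at s within {s..1}) g)"

definition regular_point :: "nat \<Rightarrow> (nat \<Rightarrow> real) \<Rightarrow> (real \<Rightarrow> real) \<Rightarrow> nat \<Rightarrow> real \<Rightarrow> bool" where
  "regular_point N \<mu> g n x \<longleftrightarrow> x \<in> {0..1} \<and> (\<forall>k<n. (g ^^ k) x \<notin> S_set N \<mu>)"

definition itins :: "nat \<Rightarrow> (nat \<Rightarrow> real) \<Rightarrow> (real \<Rightarrow> real) \<Rightarrow> nat \<Rightarrow> nat list set" where
  "itins N \<mu> g n = {\<alpha>. length \<alpha> = n \<and> set \<alpha> \<subseteq> {1..N} \<and>
      (\<exists>x. regular_point N \<mu> g n x \<and> (\<forall>k<n. (g ^^ k) x \<in> A_int N \<mu> (\<alpha> ! k)))}"

definition J_set :: "nat \<Rightarrow> ((nat \<Rightarrow> real) \<Rightarrow> real \<Rightarrow> real) \<Rightarrow> (nat \<Rightarrow> real) \<Rightarrow> real \<Rightarrow> nat \<Rightarrow> nat list set" where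
  "J_set N f \<mu>s \<delta> n = (\<Union>\<mu>\<in>{\<mu>\<in>param_space N. param_dist N \<mu> \<mu>s < \<delta>}. itins N \<mu> (f \<mu>) n)"

definition hypothesis_E :: "nat \<Rightarrow> ((nat \<Rightarrow> real) \<Rightarrow> real \<Rightarrow> real) \<Rightarrow> (nat \<Rightarrow> real) \<Rightarrow> bool" where
  "hypothesis_E N f \<mu>s \<longleftrightarrow>
     ((\<lambda>\<delta>. limsup (\<lambda>n. ereal (ln (real (card (J_set N f \<mu>s \<delta> n))) / real n)))
        \<longlongrightarrow> 0) (at_right 0)"

end

theory Submission
  imports Defs
begin


definition brn :: "nat list set \<Rightarrow> nat list \<Rightarrow> bool" where
  "brn W a \<longleftrightarrow> (\<exists>i j. i \<noteq> j \<and> a @ [i] \<in> W \<and> a @ [j] \<in> W)"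

definition Ext :: "nat list set \<Rightarrow> nat list \<Rightarrow> nat \<Rightarrow> nat list set" where
  "Ext W b d = {g. length g = d \<and> b @ g \<in> W}"

lemma Ext_finite:
  assumes W1: "\<forall>a\<in>W. set a \<subseteq> {1..N}"
  shows "finite (Ext W b d)"
proof -
  have "Ext W b d \<subseteq> {xs. set xs \<subseteq> {1..N} \<and> length xs = d}"
    unfolding Ext_def by (auto dest!: W1[rule_format])
  then show ?thesis using finite_lists_length_eq[of "{1..N}" d] finite_subset by blast
qed

lemma Ext_Suc:
  assumes W2: "\<forall>a b. a @ b \<in> W \<longrightarrow> a \<in> W"
  shows "Ext W b (Suc d) = (\<Union>i\<in>{i. b @ [i] \<in> W}. (#) i ` Ext W (b @ [i]) d)"
proof
  show "Ext W b (Suc d) \<subseteq> (\<Union>i\<in>{i. b @ [i] \<in> W}. (#) i ` Ext W (b @ [i]) d)"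
  proof
    fix g assume g: "g \<in> Ext W b (Suc d)"
    then obtain i g' where gg: "g = i # g'" "length g' = d" unfolding Ext_def
      by (auto simp: length_Suc_conv)
    have "b @ g \<in> W" using g unfolding Ext_def by auto
    then have "(b @ [i]) @ g' \<in> W" using gg by simp
    then have "b @ [i] \<in> W" using W2 by blast
    then show "g \<in> (\<Union>i\<in>{i. b @ [i] \<in> W}. (#) i ` Ext W (b @ [i]) d)"
      using gg \<open>(b @ [i]) @ g' \<in> W\<close> unfolding Ext_def by auto
  qed
next
  show "(\<Union>i\<in>{i. b @ [i] \<in> W}. (#) i ` Ext W (b @ [i]) d) \<subseteq> Ext W b (Suc d)"
    unfolding Ext_def by auto
qed

lemma children_finite:
  assumes W1: "\<forall>a\<in>W. set a \<subseteq> {1..N}"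
  shows "finite {i. b @ [i] \<in> W}" "card {i. b @ [i] \<in> W} \<le> N"
proof -
  have s: "{i. b @ [i] \<in> W} \<subseteq> {1..N}" using W1 by auto
  show "finite {i. b @ [i] \<in> W}" using s finite_subset by blast
  show "card {i. b @ [i] \<in> W} \<le> N" using card_mono[OF _ s] by simp
qed

lemma Ext_card_nobr:
  assumes W1: "\<forall>a\<in>W. set a \<subseteq> {1..N}"
    and W2: "\<forall>a b. a @ b \<in> W \<longrightarrow> a \<in> W"
  shows "(\<forall>g. length g < d \<longrightarrow> b @ g \<in> W \<longrightarrow> \<not> brn W (b @ g)) \<Longrightarrow> card (Ext W b d) \<le> 1"
proof (induction d arbitrary: b)
  case 0
  have "Ext W b 0 \<subseteq> {[]}" unfolding Ext_def by auto
  then have "card (Ext W b 0) \<le> card {[]::nat list}" by (intro card_mono) auto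
  then show ?case by simp
next
  case (Suc d)
  let ?C = "{i. b @ [i] \<in> W}"
  have nb: "\<not> brn W b"
  proof
    assume "brn W b"
    then obtain i where "b @ [i] \<in> W" unfolding brn_def by auto
    then have "b @ [] \<in> W" using W2 by (metis append.assoc append_Nil2)
    then show False using Suc.prems[rule_format, of "[]"] \<open>brn W b\<close> by simp
  qed
  show ?case
  proof (cases "?C = {}")
    case True
    then show ?thesis using Ext_Suc[OF W2, of b d] by simp
  next
    case False
    then obtain i where i: "i \<in> ?C" by blast
    then have Ci: "?C = {i}" using nb unfolding brn_def by auto
    have "card (Ext W (b @ [i]) d) \<le> 1"
    proof (rule Suc.IH, intro allI impI)
      fix g assume "length g < d" "(b @ [i]) @ g \<in> W"
      then show "\<not> brn W ((b @ [i]) @ g)"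
        using Suc.prems[rule_format, of "i # g"] by simp
    qed
    moreover have "Ext W b (Suc d) = (#) i ` Ext W (b @ [i]) d"
      using Ext_Suc[OF W2, of b d] Ci by simp
    ultimately show ?thesis using card_image_le[OF Ext_finite[OF W1], of "(#) i" "b @ [i]" d]
      by simp
  qed
qed

lemma Ext_card_main:
  assumes W1: "\<forall>a\<in>W. set a \<subseteq> {1..N}"
    and W2: "\<forall>a b. a @ b \<in> W \<longrightarrow> a \<in> W"
    and W3: "\<forall>a. length a \<ge> T0 \<longrightarrow> brn W a \<longrightarrow>
               (\<forall>g. 1 \<le> length g \<longrightarrow> length g \<le> L \<longrightarrow> a @ g \<in> W \<longrightarrow> \<not> brn W (a @ g))"
    and N1: "N \<ge> 1"
  shows "length b \<ge> T0 \<Longrightarrow> d \<le> L + 1 \<Longrightarrow> card (Ext W b d) \<le> N"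
proof (induction d arbitrary: b)
  case 0
  have "Ext W b 0 \<subseteq> {[]}" unfolding Ext_def by auto
  then have "card (Ext W b 0) \<le> card {[]::nat list}" by (intro card_mono) auto
  then show ?case using N1 by simp
next
  case (Suc d)
  let ?C = "{i. b @ [i] \<in> W}"
  have eq: "Ext W b (Suc d) = (\<Union>i\<in>?C. (#) i ` Ext W (b @ [i]) d)" using Ext_Suc[OF W2] .
  have fC: "finite ?C" "card ?C \<le> N" using children_finite[OF W1] by auto
  show ?case
  proof (cases "brn W b")
    case True
    have one: "card ((#) i ` Ext W (b @ [i]) d) \<le> 1" if "i \<in> ?C" for i
    proof -
      have "card (Ext W (b @ [i]) d) \<le> 1"
      proof (rule Ext_card_nobr[OF W1 W2], intro allI impI)
        fix g assume "length g < d" "(b @ [i]) @ g \<in> W"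
        then show "\<not> brn W ((b @ [i]) @ g)"
          using W3[rule_format, OF Suc.prems(1) True, of "i # g"] Suc.prems(2) by simp
      qed
      then show ?thesis using card_image_le[OF Ext_finite[OF W1], of "(#) i" "b @ [i]" d] by simp
    qed
    have "card (Ext W b (Suc d)) \<le> (\<Sum>i\<in>?C. card ((#) i ` Ext W (b @ [i]) d))"
      unfolding eq by (rule card_UN_le[OF fC(1)])
    also have "\<dots> \<le> (\<Sum>i\<in>?C. 1)" by (rule sum_mono) (use one in auto)
    also have "\<dots> \<le> N" using fC by simp
    finally show ?thesis .
  next
    case False
    show ?thesis
    proof (cases "?C = {}")
      case True
      then show ?thesis using eq by simp
    next
      case False
      then obtain i where i: "i \<in> ?C" by blast
      then have Ci: "?C = {i}" using \<open>\<not> brn W b\<close> unfolding brn_def by auto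
      have "card (Ext W (b @ [i]) d) \<le> N" using Suc.IH[of "b @ [i]"] Suc.prems by simp
      then show ?thesis using eq Ci card_image_le[OF Ext_finite[OF W1], of "(#) i" "b @ [i]" d]
        by simp
    qed
  qed
qed

definition Wn :: "nat list set \<Rightarrow> nat \<Rightarrow> nat list set" where
  "Wn W n = {a\<in>W. length a = n}"

lemma Wn_finite:
  assumes W1: "\<forall>a\<in>W. set a \<subseteq> {1..N}"
  shows "finite (Wn W n)" "card (Wn W n) \<le> N ^ n"
proof -
  have s: "Wn W n \<subseteq> {xs. set xs \<subseteq> {1..N} \<and> length xs = n}" using W1 unfolding Wn_def by auto
  show "finite (Wn W n)" using s finite_lists_length_eq[of "{1..N}" n] finite_subset by blast
  show "card (Wn W n) \<le> N ^ n" using card_mono[OF _ s] finite_lists_length_eq[of "{1..N}" n]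
      card_lists_length_eq[of "{1..N}" n] by simp
qed

lemma Wn_step:
  assumes W1: "\<forall>a\<in>W. set a \<subseteq> {1..N}"
    and W2: "\<forall>a b. a @ b \<in> W \<longrightarrow> a \<in> W"
    and W3: "\<forall>a. length a \<ge> T0 \<longrightarrow> brn W a \<longrightarrow>
               (\<forall>g. 1 \<le> length g \<longrightarrow> length g \<le> L \<longrightarrow> a @ g \<in> W \<longrightarrow> \<not> brn W (a @ g))"
    and N1: "N \<ge> 1" and t: "t \<ge> T0"
  shows "card (Wn W (t + (L + 1))) \<le> N * card (Wn W t)"
proof -
  have sub: "Wn W (t + (L + 1)) \<subseteq> (\<Union>a\<in>Wn W t. (\<lambda>g. a @ g) ` Ext W a (L + 1))"
  proof
    fix c assume c: "c \<in> Wn W (t + (L + 1))"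
    let ?a = "take t c" and ?g = "drop t c"
    have "?a @ ?g \<in> W" using c unfolding Wn_def by simp
    then have "?a \<in> W" using W2 by blast
    then have "?a \<in> Wn W t" using c unfolding Wn_def by auto
    moreover have "?g \<in> Ext W ?a (L + 1)" using c unfolding Wn_def Ext_def by auto
    ultimately have "?a @ ?g \<in> (\<Union>a\<in>Wn W t. (\<lambda>g. a @ g) ` Ext W a (L + 1))"
      by blast
    then show "c \<in> (\<Union>a\<in>Wn W t. (\<lambda>g. a @ g) ` Ext W a (L + 1))" by simp
  qed
  have "card (Wn W (t + (L + 1))) \<le> card (\<Union>a\<in>Wn W t. (\<lambda>g. a @ g) ` Ext W a (L + 1))"
    by (rule card_mono[OF _ sub]) (intro finite_UN_I finite_imageI Wn_finite(1)[OF W1] Ext_finite[OF W1])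
  also have "\<dots> \<le> (\<Sum>a\<in>Wn W t. card ((\<lambda>g. a @ g) ` Ext W a (L + 1)))"
    by (rule card_UN_le[OF Wn_finite(1)[OF W1]])
  also have "\<dots> \<le> (\<Sum>a\<in>Wn W t. N)"
  proof (rule sum_mono)
    fix a assume "a \<in> Wn W t"
    then have "card (Ext W a (L + 1)) \<le> N"
      using Ext_card_main[OF W1 W2 W3 N1] t unfolding Wn_def by auto
    then show "card ((\<lambda>g. a @ g) ` Ext W a (L + 1)) \<le> N"
      using card_image_le[OF Ext_finite[OF W1], of "\<lambda>g. a @ g" a "L+1"] by simp
  qed
  also have "\<dots> = N * card (Wn W t)" by simp
  finally show ?thesis .
qed

lemma Wn_bound:
  assumes W1: "\<forall>a\<in>W. set a \<subseteq> {1..N}"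
    and W2: "\<forall>a b. a @ b \<in> W \<longrightarrow> a \<in> W"
    and W3: "\<forall>a. length a \<ge> T0 \<longrightarrow> brn W a \<longrightarrow>
               (\<forall>g. 1 \<le> length g \<longrightarrow> length g \<le> L \<longrightarrow> a @ g \<in> W \<longrightarrow> \<not> brn W (a @ g))"
    and N1: "N \<ge> 1"
  shows "card (Wn W n) \<le> N ^ (T0 + L + 1) * N ^ (n div (L + 1))"
proof (induction n rule: less_induct)
  case (less n)
  show ?case
  proof (cases "n < T0 + (L + 1)")
    case True
    have "card (Wn W n) \<le> N ^ n" using Wn_finite[OF W1] by simp
    also have "\<dots> \<le> N ^ (T0 + L + 1)" using True N1 by (intro power_increasing) auto
    also have "\<dots> \<le> N ^ (T0 + L + 1) * N ^ (n div (L + 1))" using N1 by simp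
    finally show ?thesis .
  next
    case False
    define t where "t = n - (L + 1)"
    have n: "n = t + (L + 1)" "t \<ge> T0" "t < n" using False unfolding t_def by auto
    have "card (Wn W n) \<le> N * card (Wn W t)" using Wn_step[OF W1 W2 W3 N1 n(2)] n(1) by simp
    also have "\<dots> \<le> N * (N ^ (T0 + L + 1) * N ^ (t div (L + 1)))"
      using less.IH[OF n(3)] by simp
    also have "\<dots> = N ^ (T0 + L + 1) * N ^ (t div (L + 1) + 1)"
      by (simp add: power_add)
    also have "t div (L + 1) + 1 = n div (L + 1)"
      by (subst n(1), subst div_add_self2) simp_all
    finally show ?thesis .
  qed
qed



lemma limsup_bound:
  fixes c :: "nat \<Rightarrow> nat" and N K L :: nat
  assumes N1: "N \<ge> 1" and bd: "\<And>n. real (c n) \<le> real N ^ K * real N ^ (n div (L + 1))"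
  shows "limsup (\<lambda>n. ereal (ln (real (c n)) / real n)) \<le> ereal (ln (real N) / real (L + 1))"
proof -
  define b where "b n = K * ln (real N) / real n + ln (real N) / real (L + 1)" for n
  have lnN: "ln (real N) \<ge> 0" using N1 by simp
  have ev: "eventually (\<lambda>n. ereal (ln (real (c n)) / real n) \<le> ereal (b n)) sequentially"
    using eventually_ge_at_top[of 1]
  proof eventually_elim
    case (elim n)
    have np: "real n > 0" using elim by simp
    have "ln (real (c n)) \<le> K * ln (real N) + real n / real (L + 1) * ln (real N)"
    proof (cases "c n = 0")
      case True
      then show ?thesis using lnN np by simp
    next
      case False
      then have cp: "real (c n) > 0" by simp
      have Np: "real N > 0" using N1 by simp
      have "ln (real (c n)) \<le> ln (real N ^ K * real N ^ (n div (L + 1)))"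
        using bd[of n] cp by simp
      also have "\<dots> = K * ln (real N) + real (n div (L + 1)) * ln (real N)"
        using Np by (simp add: ln_mult ln_realpow)
      also have "\<dots> \<le> K * ln (real N) + real n / real (L + 1) * ln (real N)"
        using lnN of_nat_div_le_of_nat[of n "L + 1"] by (intro add_left_mono mult_right_mono) auto
      finally show ?thesis .
    qed
    then have "ln (real (c n)) / real n \<le> (K * ln (real N) + real n / real (L + 1) * ln (real N)) / real n"
      using np by (intro divide_right_mono) auto
    also have "\<dots> = b n" using np unfolding b_def by (simp add: field_simps)
    finally show ?case by simp
  qed
  have lim: "(b \<longlongrightarrow> ln (real N) / real (L + 1)) sequentially"
    unfolding b_def
    using tendsto_add[OF lim_const_over_n[of "K * ln (real N)"] tendsto_const[of "ln (real N) / real (L + 1)"]]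
    by simp
  have "limsup (\<lambda>n. ereal (ln (real (c n)) / real n)) \<le> limsup (\<lambda>n. ereal (b n))"
    by (rule Limsup_mono[OF ev])
  also have "\<dots> = ereal (ln (real N) / real (L + 1))"
    by (rule lim_imp_Limsup) (use lim in auto)
  finally show ?thesis .
qed

lemma limsup_nonneg:
  fixes c :: "nat \<Rightarrow> nat"
  shows "0 \<le> limsup (\<lambda>n. ereal (ln (real (c n)) / real n))"
proof (rule le_Limsup)
  show "sequentially \<noteq> bot" by simp
  show "\<forall>\<^sub>F n in sequentially. 0 \<le> ereal (ln (real (c n)) / real n)"
  proof (rule always_eventually, rule allI)
    fix n
    have "0 \<le> ln (real (c n))" by (cases "c n = 0") auto
    then show "0 \<le> ereal (ln (real (c n)) / real n)" by simp
  qed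
qed

lemma tendsto_from_bounds:
  fixes F :: "real \<Rightarrow> ereal" and N :: nat
  assumes nonneg: "\<And>d. 0 \<le> F d"
    and ub: "\<And>L::nat. \<exists>d0>0. \<forall>d. 0 < d \<longrightarrow> d \<le> d0 \<longrightarrow> F d \<le> ereal (ln (real N) / real (L + 1))"
  shows "(F \<longlongrightarrow> 0) (at_right 0)"
proof (rule order_tendstoI)
  fix a :: ereal assume "a < 0"
  then show "\<forall>\<^sub>F d in at_right 0. a < F d" using nonneg
    by (intro always_eventually allI) (meson le_less_trans not_le)
next
  fix a :: ereal assume a: "0 < a"
  obtain r where r: "r > 0" "ereal r \<le> a"
  proof (cases a)
    case (real r) then show ?thesis using a that by auto
  next
    case PInf then show ?thesis using that[of 1] by auto
  next
    case MInf then show ?thesis using a by auto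
  qed
  obtain L :: nat where L: "ln (real N) / r < real L" using reals_Archimedean2 by blast
  have "ln (real N) / real (L + 1) < r"
    using L r(1) by (simp add: field_simps divide_less_eq)
  obtain d0 where d0: "d0 > 0" "\<forall>d. 0 < d \<longrightarrow> d \<le> d0 \<longrightarrow> F d \<le> ereal (ln (real N) / real (L + 1))"
    using ub[of L] by blast
  show "\<forall>\<^sub>F d in at_right 0. F d < a"
    unfolding eventually_at_right_field
  proof (intro exI[of _ d0] conjI allI impI)
    show "(0::real) < d0" using d0 by simp
    fix d :: real assume "0 < d" "d < d0"
    then have "F d \<le> ereal (ln (real N) / real (L + 1))" using d0 by auto
    also have "\<dots> < ereal r" using \<open>ln (real N) / real (L + 1) < r\<close> by simp
    also have "\<dots> \<le> a" using r by simp
    finally show "F d < a" .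
  qed
qed



lemma cw_Nil[simp]: "comp_word \<phi> [] x = x" unfolding comp_word_def by simp
lemma cw_Cons[simp]: "comp_word \<phi> (i # a) x = comp_word \<phi> a (\<phi> i x)" unfolding comp_word_def by simp
lemma cw_append: "comp_word \<phi> (a @ b) x = comp_word \<phi> b (comp_word \<phi> a x)"
  unfolding comp_word_def by simp
lemma cw_snoc: "comp_word \<phi> (a @ [i]) x = \<phi> i (comp_word \<phi> a x)"
  by (simp add: cw_append)

lemma ph_in:
  fixes \<phi> :: "nat \<Rightarrow> real \<Rightarrow> real"
  assumes ph: "\<forall>i\<in>{1..N}. \<phi> i ` {0..1} \<subseteq> {0<..<1}" and "i \<in> {1..N}" "x \<in> {0..1::real}"
  shows "\<phi> i x \<in> {0<..<1}" "\<phi> i x \<in> {0..1}"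
proof -
  show "\<phi> i x \<in> {0<..<1}" using assms unfolding image_subset_iff by blast
  then show "\<phi> i x \<in> {0..1}" by auto
qed

lemma cw_range:
  assumes ph: "\<forall>i\<in>{1..N}. \<phi> i ` {0..1} \<subseteq> {0<..<1}"
  shows "set a \<subseteq> {1..N} \<Longrightarrow> x \<in> {0..1} \<Longrightarrow> comp_word \<phi> a x \<in> {0..1::real}"
proof (induction a arbitrary: x)
  case Nil then show ?case by simp
next
  case (Cons i a)
  have "\<phi> i x \<in> {0..1}" using ph_in[OF ph, of i x] Cons.prems by simp
  then show ?case using Cons by simp
qed

lemma cw_lip:
  assumes lip: "\<forall>i\<in>{1..N}. bi_lipschitz_contr lam (\<phi> i)"
    and ph: "\<forall>i\<in>{1..N}. \<phi> i ` {0..1} \<subseteq> {0<..<1}" and lam0: "0 < lam"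
  shows "set a \<subseteq> {1..N} \<Longrightarrow> x \<in> {0..1} \<Longrightarrow> y \<in> {0..1} \<Longrightarrow>
    \<bar>comp_word \<phi> a x - comp_word \<phi> a y\<bar> \<le> lam ^ length a * \<bar>x - y\<bar>"
proof (induction a arbitrary: x y)
  case Nil then show ?case by simp
next
  case (Cons i a)
  have i: "i \<in> {1..N}" using Cons.prems by simp
  have xy: "\<phi> i x \<in> {0..1}" "\<phi> i y \<in> {0..1}" using ph_in(2)[OF ph i] Cons.prems by auto
  have "\<bar>comp_word \<phi> (i # a) x - comp_word \<phi> (i # a) y\<bar> \<le> lam ^ length a * \<bar>\<phi> i x - \<phi> i y\<bar>"
    using Cons.IH[OF _ xy] Cons.prems by simp
  also have "\<dots> \<le> lam ^ length a * (lam * \<bar>x - y\<bar>)"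
    using lip i Cons.prems lam0 unfolding bi_lipschitz_contr_def
    by (intro mult_left_mono) auto
  also have "\<dots> = lam ^ length (i # a) * \<bar>x - y\<bar>" by simp
  finally show ?case .
qed

lemma orbit_eq:
  assumes adm: "admissible_map N \<phi> \<mu> g"
    and sa: "set a \<subseteq> {1..N}"
    and orb: "\<forall>k<length a. (g ^^ k) x \<in> A_int N \<mu> (a ! k)"
  shows "k \<le> length a \<Longrightarrow> (g ^^ k) x = comp_word \<phi> (take k a) x"
proof (induction k)
  case 0 then show ?case by simp
next
  case (Suc k)
  have k: "k < length a" using Suc.prems by simp
  have ak: "a ! k \<in> {1..N}" using sa k nth_mem by blast
  have "(g ^^ Suc k) x = g ((g ^^ k) x)" by simp
  also have "\<dots> = \<phi> (a ! k) ((g ^^ k) x)"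
    using adm orb k ak unfolding admissible_map_def by blast
  also have "\<dots> = \<phi> (a ! k) (comp_word \<phi> (take k a) x)" using Suc.IH k by simp
  also have "\<dots> = comp_word \<phi> (take (Suc k) a) x"
    using k by (simp add: take_Suc_conv_app_nth cw_snoc)
  finally show ?case .
qed

lemma itins_last:
  assumes adm: "admissible_map N \<phi> \<mu> g"
    and mem: "a @ [i] \<in> itins N \<mu> g n"
  shows "\<exists>x\<in>{0..1}. comp_word \<phi> a x \<in> A_int N \<mu> i"
proof -
  have n: "n = length a + 1" and sa: "set (a @ [i]) \<subseteq> {1..N}" using mem unfolding itins_def by auto
  obtain x where reg: "regular_point N \<mu> g n x"
    and orb: "\<forall>k<n. (g ^^ k) x \<in> A_int N \<mu> ((a @ [i]) ! k)"
    using mem unfolding itins_def by auto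
  have x01: "x \<in> {0..1}" using reg unfolding regular_point_def by auto
  have orb': "\<forall>k<length (a @ [i]). (g ^^ k) x \<in> A_int N \<mu> ((a @ [i]) ! k)" using orb n by simp
  have "(g ^^ length a) x = comp_word \<phi> (take (length a) (a @ [i])) x"
    by (rule orbit_eq[OF adm sa orb']) simp
  moreover have "(g ^^ length a) x \<in> A_int N \<mu> i" using orb n by (metis lessI nth_append_length Suc_eq_plus1)
  ultimately show ?thesis using x01 by auto
qed

lemma itins_prefix:
  assumes mem: "a @ b \<in> itins N \<mu> g n"
  shows "a \<in> itins N \<mu> g (length a)"
proof -
  have n: "n = length a + length b" and sa: "set (a @ b) \<subseteq> {1..N}" using mem unfolding itins_def by auto
  obtain x where reg: "regular_point N \<mu> g n x"
    and orb: "\<forall>k<n. (g ^^ k) x \<in> A_int N \<mu> ((a @ b) ! k)"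
    using mem unfolding itins_def by auto
  have "regular_point N \<mu> g (length a) x" using reg n unfolding regular_point_def by auto
  moreover have "\<forall>k<length a. (g ^^ k) x \<in> A_int N \<mu> (a ! k)"
  proof (intro allI impI)
    fix k assume k: "k < length a"
    then have "(g ^^ k) x \<in> A_int N \<mu> ((a @ b) ! k)" using orb n by simp
    then show "(g ^^ k) x \<in> A_int N \<mu> (a ! k)" using k by (simp add: nth_append)
  qed
  ultimately show ?thesis using sa unfolding itins_def by auto
qed

lemma param_dist_comp:
  assumes "i \<in> {1..N-1}"
  shows "\<bar>\<mu> i - \<nu> i\<bar> \<le> param_dist N \<mu> \<nu>"
proof -
  have "(\<mu> i - \<nu> i)\<^sup>2 \<le> (\<Sum>j=1..N-1. (\<mu> j - \<nu> j)\<^sup>2)"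
    using assms by (intro member_le_sum) auto
  then have "sqrt ((\<mu> i - \<nu> i)\<^sup>2) \<le> param_dist N \<mu> \<nu>"
    unfolding param_dist_def by (rule real_sqrt_le_mono)
  then show ?thesis by simp
qed

lemma A_upper:
  assumes "i \<ge> 1" "i < N" "y \<in> A_int N \<mu> i"
  shows "y < \<mu> i"
  using assms unfolding A_int_def mu_ext_def by auto

lemma A_lower:
  assumes mu: "\<mu> \<in> param_space N" and ij: "1 \<le> i" "i < j" "j \<le> N" and y: "y \<in> A_int N \<mu> j"
  shows "y > \<mu> i"
proof -
  have e: "mu_ext N \<mu> (j - 1) = \<mu> (j - 1)" using ij unfolding mu_ext_def by auto
  have "\<mu> i \<le> \<mu> (j - 1)"
  proof (cases "i = j - 1")
    case True then show ?thesis by simp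
  next
    case False
    then show ?thesis using mu ij unfolding param_space_def by (auto intro: less_imp_le)
  qed
  moreover have "y > mu_ext N \<mu> (j - 1)" using y unfolding A_int_def by simp
  ultimately show ?thesis using e by simp
qed

definition Wd :: "nat \<Rightarrow> ((nat \<Rightarrow> real) \<Rightarrow> real \<Rightarrow> real) \<Rightarrow> (nat \<Rightarrow> real) \<Rightarrow> real \<Rightarrow> nat list set" where
  "Wd N f \<mu>s \<delta> = {a. a \<in> J_set N f \<mu>s \<delta> (length a)}"

lemma Wd_mem: "a \<in> Wd N f \<mu>s \<delta> \<longleftrightarrow>
   (\<exists>\<mu>\<in>param_space N. param_dist N \<mu> \<mu>s < \<delta> \<and> a \<in> itins N \<mu> (f \<mu>) (length a))"
  unfolding Wd_def J_set_def by auto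

lemma J_Wd: "J_set N f \<mu>s \<delta> n = {a \<in> Wd N f \<mu>s \<delta>. length a = n}"
  unfolding Wd_def J_set_def itins_def by auto

lemma Wd_W1: "\<forall>a\<in>Wd N f \<mu>s \<delta>. set a \<subseteq> {1..N}"
proof
  fix a assume "a \<in> Wd N f \<mu>s \<delta>"
  then obtain \<mu> where "a \<in> itins N \<mu> (f \<mu>) (length a)" unfolding Wd_mem by blast
  then show "set a \<subseteq> {1..N}" unfolding itins_def by blast
qed

lemma Wd_W2: "\<forall>a b. a @ b \<in> Wd N f \<mu>s \<delta> \<longrightarrow> a \<in> Wd N f \<mu>s \<delta>"
proof (intro allI impI)
  fix a b assume "a @ b \<in> Wd N f \<mu>s \<delta>"
  then obtain \<mu> where "\<mu> \<in> param_space N" "param_dist N \<mu> \<mu>s < \<delta>"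
    "a @ b \<in> itins N \<mu> (f \<mu>) (length (a @ b))" unfolding Wd_mem by blast
  then show "a \<in> Wd N f \<mu>s \<delta>" unfolding Wd_mem using itins_prefix by blast
qed

lemma branch_helper:
  assumes lip: "\<forall>i\<in>{1..N}. bi_lipschitz_contr lam (\<phi> i)"
    and ph: "\<forall>i\<in>{1..N}. \<phi> i ` {0..1} \<subseteq> {0<..<1}" and lam0: "0 < lam"
    and adm: "\<forall>\<mu>\<in>param_space N. admissible_map N \<phi> \<mu> (f \<mu>)"
    and ij: "1 \<le> i" "i < j" "j \<le> N"
    and ai: "a @ [i] \<in> Wd N f \<mu>s \<delta>" and aj: "a @ [j] \<in> Wd N f \<mu>s \<delta>"
  shows "\<forall>z\<in>{0..1}. \<bar>comp_word \<phi> a z - \<mu>s i\<bar> \<le> lam ^ length a + \<delta>"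
proof
  fix z :: real assume z: "z \<in> {0..1}"
  obtain \<mu> where mu: "\<mu> \<in> param_space N" "param_dist N \<mu> \<mu>s < \<delta>"
    "a @ [i] \<in> itins N \<mu> (f \<mu>) (length (a @ [i]))" using ai unfolding Wd_mem by blast
  obtain \<mu>' where mu': "\<mu>' \<in> param_space N" "param_dist N \<mu>' \<mu>s < \<delta>"
    "a @ [j] \<in> itins N \<mu>' (f \<mu>') (length (a @ [j]))" using aj unfolding Wd_mem by blast
  obtain x where x: "x \<in> {0..1}" "comp_word \<phi> a x \<in> A_int N \<mu> i"
    using itins_last[OF _ mu(3)] adm mu(1) by blast
  obtain x' where x': "x' \<in> {0..1}" "comp_word \<phi> a x' \<in> A_int N \<mu>' j"
    using itins_last[OF _ mu'(3)] adm mu'(1) by blast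
  have sa: "set a \<subseteq> {1..N}" using mu(3) unfolding itins_def by auto
  have i1: "i \<in> {1..N-1}" using ij by auto
  have y: "comp_word \<phi> a x < \<mu> i" using A_upper[OF ij(1) _ x(2)] ij by simp
  have y': "comp_word \<phi> a x' > \<mu>' i" using A_lower[OF mu'(1) ij x'(2)] .
  have d1: "\<bar>\<mu> i - \<mu>s i\<bar> < \<delta>" using param_dist_comp[OF i1, of \<mu> \<mu>s] mu(2) by simp
  have d2: "\<bar>\<mu>' i - \<mu>s i\<bar> < \<delta>" using param_dist_comp[OF i1, of \<mu>' \<mu>s] mu'(2) by simp
  have lp: "lam ^ length a \<ge> 0" using lam0 by simp
  have c1: "\<bar>comp_word \<phi> a z - comp_word \<phi> a x\<bar> \<le> lam ^ length a * \<bar>z - x\<bar>"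
    using cw_lip[OF lip ph lam0 sa z x(1)] .
  have c2: "\<bar>comp_word \<phi> a z - comp_word \<phi> a x'\<bar> \<le> lam ^ length a * \<bar>z - x'\<bar>"
    using cw_lip[OF lip ph lam0 sa z x'(1)] .
  have "lam ^ length a * \<bar>z - x\<bar> \<le> lam ^ length a * 1" using z x(1) lp
    by (intro mult_left_mono) auto
  moreover have "lam ^ length a * \<bar>z - x'\<bar> \<le> lam ^ length a * 1" using z x'(1) lp
    by (intro mult_left_mono) auto
  ultimately show "\<bar>comp_word \<phi> a z - \<mu>s i\<bar> \<le> lam ^ length a + \<delta>"
    using c1 c2 y y' d1 d2 by (simp add: abs_le_iff abs_less_iff)
qed

lemma branch_near:
  assumes lip: "\<forall>i\<in>{1..N}. bi_lipschitz_contr lam (\<phi> i)"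
    and ph: "\<forall>i\<in>{1..N}. \<phi> i ` {0..1} \<subseteq> {0<..<1}" and lam0: "0 < lam"
    and adm: "\<forall>\<mu>\<in>param_space N. admissible_map N \<phi> \<mu> (f \<mu>)"
    and br: "\<exists>i j. i \<noteq> j \<and> a @ [i] \<in> Wd N f \<mu>s \<delta> \<and> a @ [j] \<in> Wd N f \<mu>s \<delta>"
  shows "\<exists>p\<in>{1..N-1}. \<forall>z\<in>{0..1}. \<bar>comp_word \<phi> a z - \<mu>s p\<bar> \<le> lam ^ length a + \<delta>"
proof -
  obtain i j where ij: "i \<noteq> j" "a @ [i] \<in> Wd N f \<mu>s \<delta>" "a @ [j] \<in> Wd N f \<mu>s \<delta>" using br by blast
  have si: "i \<in> {1..N}" "j \<in> {1..N}" using ij Wd_W1 by fastforce+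
  show ?thesis
  proof (cases "i < j")
    case True
    then show ?thesis using branch_helper[OF lip ph lam0 adm _ True _ ij(2,3)] si by auto
  next
    case False
    then have "j < i" using ij by simp
    then show ?thesis using branch_helper[OF lip ph lam0 adm _ \<open>j < i\<close> _ ij(3,2)] si by auto
  qed
qed

lemma margin:
  assumes nsc: "\<not> singular_connection N \<phi> \<mu>s"
  shows "\<exists>\<eta>>0. \<forall>g p q. set g \<subseteq> {1..N} \<longrightarrow> 1 \<le> length g \<longrightarrow> length g \<le> L \<longrightarrow>
     p \<in> {1..N-1} \<longrightarrow> q \<in> {1..N-1} \<longrightarrow> \<eta> \<le> \<bar>comp_word \<phi> g (\<mu>s p) - \<mu>s q\<bar>"
proof -
  define G where "G = {g. set g \<subseteq> {1..N} \<and> length g \<le> L \<and> 1 \<le> length g}"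
  define V where "V = (\<lambda>(g, p, q). \<bar>comp_word \<phi> g (\<mu>s p) - \<mu>s q\<bar>) ` (G \<times> {1..N-1} \<times> {1..N-1})"
  have fG: "finite G" unfolding G_def
    by (rule finite_subset[OF _ finite_lists_length_le[of "{1..N}" L]]) auto
  have fV: "finite V" unfolding V_def using fG by auto
  have pos: "\<forall>v\<in>V. v > 0"
  proof
    fix v assume "v \<in> V"
    then obtain g p q where "v = \<bar>comp_word \<phi> g (\<mu>s p) - \<mu>s q\<bar>" "g \<in> G" "p \<in> {1..N-1}" "q \<in> {1..N-1}"
      unfolding V_def by auto
    moreover have "comp_word \<phi> g (\<mu>s p) \<noteq> \<mu>s q"
      using nsc calculation unfolding singular_connection_def G_def by auto
    ultimately show "v > 0" by simp
  qed
  obtain \<eta> where eta: "\<eta> > 0" "\<forall>v\<in>V. \<eta> \<le> v"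
  proof (cases "V = {}")
    case True then show ?thesis using that[of 1] by auto
  next
    case False
    then show ?thesis using that[of "Min V"] fV pos by auto
  qed
  show ?thesis
  proof (intro exI[of _ \<eta>] conjI allI impI)
    show "\<eta> > 0" using eta by simp
    fix g p q assume "set g \<subseteq> {1..N}" "1 \<le> length g" "length g \<le> L" "p \<in> {1..N-1}" "q \<in> {1..N-1}"
    then have "\<bar>comp_word \<phi> g (\<mu>s p) - \<mu>s q\<bar> \<in> V" unfolding V_def G_def by force
    then show "\<eta> \<le> \<bar>comp_word \<phi> g (\<mu>s p) - \<mu>s q\<bar>" using eta by blast
  qed
qed

theorem lemma4p5:
  fixes N :: nat and lam :: real and \<phi> :: "nat \<Rightarrow> real \<Rightarrow> real"
    and f :: "(nat \<Rightarrow> real) \<Rightarrow> real \<Rightarrow> real" and \<mu>s :: "nat \<Rightarrow> real"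
  assumes "N \<ge> 2" and "0 < lam" and "lam < 1"
    and "\<forall>i\<in>{1..N}. bi_lipschitz_contr lam (\<phi> i)"
    and "\<forall>i\<in>{1..N}. \<phi> i ` {0..1} \<subseteq> {0<..<1}"
    and "\<forall>\<mu>\<in>param_space N. admissible_map N \<phi> \<mu> (f \<mu>)"
    and "\<mu>s \<in> param_space N"
    and "\<not> singular_connection N \<phi> \<mu>s"
  shows "hypothesis_E N f \<mu>s"
proof -
  have N1: "N \<ge> 1" using assms(1) by simp
  have ub: "\<exists>d0>0. \<forall>d. 0 < d \<longrightarrow> d \<le> d0 \<longrightarrow>
     limsup (\<lambda>n. ereal (ln (real (card (J_set N f \<mu>s d n))) / real n)) \<le> ereal (ln (real N) / real (L + 1))"
    for L :: nat
  proof -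
    obtain \<eta> where eta: "\<eta> > 0" and etaP: "\<forall>g p q. set g \<subseteq> {1..N} \<longrightarrow> 1 \<le> length g \<longrightarrow> length g \<le> L \<longrightarrow>
     p \<in> {1..N-1} \<longrightarrow> q \<in> {1..N-1} \<longrightarrow> \<eta> \<le> \<bar>comp_word \<phi> g (\<mu>s p) - \<mu>s q\<bar>"
      using margin[OF assms(8), of L] by blast
    obtain T0 where T0: "lam ^ T0 < \<eta> / 4" using real_arch_pow_inv[of "\<eta> / 4" lam] eta assms(3) by auto
    show ?thesis
    proof (intro exI[of _ "\<eta> / 4"] conjI allI impI)
      show "\<eta> / 4 > 0" using eta by simp
      fix d :: real assume d: "0 < d" "d \<le> \<eta> / 4"
      let ?W = "Wd N f \<mu>s d"
      have W1: "\<forall>a\<in>?W. set a \<subseteq> {1..N}" by (rule Wd_W1)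
      have W2: "\<forall>a b. a @ b \<in> ?W \<longrightarrow> a \<in> ?W" by (rule Wd_W2)
      have W3: "\<forall>a. length a \<ge> T0 \<longrightarrow> brn ?W a \<longrightarrow>
               (\<forall>g. 1 \<le> length g \<longrightarrow> length g \<le> L \<longrightarrow> a @ g \<in> ?W \<longrightarrow> \<not> brn ?W (a @ g))"
      proof (intro allI impI notI)
        fix a g assume a: "T0 \<le> length a" "brn ?W a"
          and g: "1 \<le> length g" "length g \<le> L" "a @ g \<in> ?W" "brn ?W (a @ g)"
        obtain p where p: "p \<in> {1..N-1}" "\<forall>z\<in>{0..1}. \<bar>comp_word \<phi> a z - \<mu>s p\<bar> \<le> lam ^ length a + d"
          using branch_near[OF assms(4) assms(5) assms(2) assms(6)] a(2) unfolding brn_def by blast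
        obtain q where q: "q \<in> {1..N-1}"
          "\<forall>z\<in>{0..1}. \<bar>comp_word \<phi> (a @ g) z - \<mu>s q\<bar> \<le> lam ^ length (a @ g) + d"
          using branch_near[OF assms(4) assms(5) assms(2) assms(6)] g(4) unfolding brn_def by blast
        have sag: "set (a @ g) \<subseteq> {1..N}" using W1 g(3) by blast
        then have sg: "set g \<subseteq> {1..N}" and sa: "set a \<subseteq> {1..N}" by auto
        define w where "w = comp_word \<phi> a 0"
        have w01: "w \<in> {0..1}" using cw_range[OF assms(5) sa, of 0] w_def by simp
        have mup: "\<mu>s p \<in> {0..1}" using assms(7) p(1) unfolding param_space_def
          by (auto intro: less_imp_le)
        have h1: "\<bar>w - \<mu>s p\<bar> \<le> lam ^ length a + d" using p(2) w_def by simp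
        have h2: "\<bar>comp_word \<phi> g w - \<mu>s q\<bar> \<le> lam ^ length (a @ g) + d"
        proof -
          have "(0::real) \<in> {0..1}" by simp
          then have "\<bar>comp_word \<phi> (a @ g) 0 - \<mu>s q\<bar> \<le> lam ^ length (a @ g) + d" using q(2) by blast
          then show ?thesis unfolding w_def cw_append by simp
        qed
        have h3: "\<bar>comp_word \<phi> g w - comp_word \<phi> g (\<mu>s p)\<bar> \<le> lam ^ length g * \<bar>w - \<mu>s p\<bar>"
          using cw_lip[OF assms(4) assms(5) assms(2) sg w01 mup] .
        have lg: "lam ^ length g \<le> 1" using assms(2,3) by (simp add: power_le_one)
        have h4: "lam ^ length g * \<bar>w - \<mu>s p\<bar> \<le> \<bar>w - \<mu>s p\<bar>"
          using lg assms(2) by (simp add: mult_left_le_one_le)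
        have la: "lam ^ length a \<le> lam ^ T0" using power_decreasing[of T0 "length a" lam] a(1) assms(2,3) by simp
        have lag: "lam ^ length (a @ g) \<le> lam ^ length a"
          using power_decreasing[of "length a" "length (a @ g)" lam] assms(2,3) by simp
        have "\<eta> \<le> \<bar>comp_word \<phi> g (\<mu>s p) - \<mu>s q\<bar>" using etaP sg g(1,2) p(1) q(1) by blast
        then show False using h1 h2 h3 h4 la lag T0 d by (simp add: abs_le_iff) linarith
      qed
      have bd: "real (card (J_set N f \<mu>s d n)) \<le> real N ^ (T0 + L + 1) * real N ^ (n div (L + 1))" for n
      proof -
        have "J_set N f \<mu>s d n = Wn ?W n" unfolding J_Wd Wn_def by simp
        then have "card (J_set N f \<mu>s d n) \<le> N ^ (T0 + L + 1) * N ^ (n div (L + 1))"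
          using Wn_bound[OF W1 W2 W3 N1] by simp
        then have "real (card (J_set N f \<mu>s d n)) \<le> real (N ^ (T0 + L + 1) * N ^ (n div (L + 1)))"
          by (rule of_nat_mono)
        then show ?thesis by simp
      qed
      show "limsup (\<lambda>n. ereal (ln (real (card (J_set N f \<mu>s d n))) / real n)) \<le> ereal (ln (real N) / real (L + 1))"
        by (rule limsup_bound[OF N1 bd])
    qed
  qed
  show ?thesis unfolding hypothesis_E_def
    by (rule tendsto_from_bounds[OF limsup_nonneg ub])
qed

end
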